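(* Let $W_{Y|\mathbf{X}}:\mathcal{X}_1\times\dots\times\mathcal{X}_K\to\mathcal{P}(\mathcal{Y})$ be a discrete memoryless $K$-input multiple-access channel with finite alphabets, cost functions $\phi_k:\mathcal{X}_k\to\mathbb{R}_+$ and cost constraints $\boldsymbol\Phi\in\mathbb{R}_+^K$. If the DI capacity region $\mathsf{C}_{\mathsf{DI}}(W_{Y|\mathbf{X}},\boldsymbol\phi,\boldsymbol\Phi)$ contains a rate tuple $\mathbf{R}$ with $R_k>0$ for all $k\in[K]$, then every sequence $(\mathbf{M}_n)_{n\in\mathbb{N}}$ of code size tuples $\mathbf{M}_n\in\mathbb{N}^K$ is achievable for average-error deterministic identification (DIA) under the constraint $\frac1n\sum_{i=1}^n\boldsymbol\phi(\mathbf{x}_i)\preceq\boldsymbol\Phi$.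
   Context: Notation: $[K]=\{1,\dots,K\}$, $\preceq$ is componentwise $\le$, $\boldsymbol\phi(\mathbf{x})=(\phi_1(x_1),\dots,\phi_K(x_K))$, $W^n_{Y|\mathbf{X}}(y^n|\mathbf{x}^n)=\prod_iW_{Y|\mathbf{X}}(y_i|\mathbf{x}_i)$. An $(\mathbf{M},n)$ DI code is a pair $(\mathbf{f},g)$ with encoders $f_k:[M_k]\to\mathcal{X}_k^n$ and $g:[M_1]\times\dots\times[M_K]\times\mathcal{Y}^n\to\{0,1\}^K$ (components $g_k$); message tuple $\mathbf{m}$ is sent as $\mathbf{f}(\mathbf{m})=(f_1(m_1),\dots,f_K(m_K))$ and $Y^n\sim W^n_{Y|\mathbf{X}}(\cdot|\mathbf{f}(\mathbf{m}))$. Errors: $e_k(\mathbf{m}'|\mathbf{m})=\Pr[g_k(\mathbf{m}',Y^n)\ne\mathbf{1}\{m'_k=m_k\}]$ and $e(\mathbf{m}'|\mathbf{m})=\Pr[\exists k: g_k(\mathbf{m}',Y^n)\ne\mathbf{1}\{m'_k=m_k\}]$. Achievability under the maximal-error criterion: an $(\mathbf{M},n,\boldsymbol\phi,\boldsymbol\Phi,\lambda)$ DI code is an $(\mathbf{M},n)$ DI code whose codeword tuples all satisfy $\frac1n\sum_i\boldsymbol\phi(\mathbf{x}_i)\preceq\boldsymbol\Phi$ and with $e(\mathbf{m}'|\mathbf{m})\le\lambda$ for all $\mathbf{m},\mathbf{m}'$; a rate tuple $\mathbf{R}\in\mathbb{R}_+^K$ is achievable if for every $\lambda>0$ and all large $n$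 such a code exists with $\frac1n\log_2M_k\ge R_k$; $\mathsf{C}_{\mathsf{DI}}$ is the closure of the set of achievable rate tuples. Average-error criterion: for a receiver's tuple $\mathbf{m}'$ and sender $k$, $\bar e_k(\mathbf{m}')$ is the average of $e_k(\mathbf{m}'|\mathbf{m})$ over messages $\mathbf{m}$ with $m_k$ uniform on $[M_k]\setminus\{m'_k\}$ and $m_j$ uniform on $[M_j]$ for $j\ne k$, and $\bar e(\mathbf{m}')=\sum_k\bar e_k(\mathbf{m}')$. An $(\mathbf{M},n,\boldsymbol\phi,\boldsymbol\Phi,\lambda)$ DIA code is an $(\mathbf{M},n)$ DI code satisfying the cost constraint for all codeword tuples, with $e(\mathbf{m}|\mathbf{m})\le\lambda$ for all $\mathbf{m}$ and $\bar e(\mathbf{m}')\le\lambda$ for all $\mathbf{m}'$. A sequence $(\mathbf{M}_n)_{n}$ is achievable if for every $\lambda>0$ and all sufficiently large $n$ there exists an $(\mathbf{M}_n,n,\boldsymbol\phi,\boldsymbol\Phi,\lambda)$ DIA code. *)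

theory Defs
  imports "HOL-Analysis.Analysis" "HOL-Probability.Probability"
begin

text \<open>
  K senders are indexed by a finite type 'k (so K = CARD('k) >= 1).
  Input symbols of all senders live in a common type 'a; sender k uses the finite
  alphabet Xs k.
  Encoder: f k m i = i-th symbol (i < n) of the codeword of message m of sender k.
  Decoder: g m' ys k = g_k(m', y^n).
\<close>

definition msgs :: "('k \<Rightarrow> nat) \<Rightarrow> ('k \<Rightarrow> nat) set" where
  "msgs M = Pi UNIV (\<lambda>k. {1..M k})"

definition out_pmf ::
  "(('k \<Rightarrow> 'a) \<Rightarrow> 'y pmf) \<Rightarrow> nat \<Rightarrow> ('k \<Rightarrow> nat \<Rightarrow> nat \<Rightarrow> 'a) \<Rightarrow> ('k \<Rightarrow> nat) \<Rightarrow> (nat \<Rightarrow> 'y) pmf" where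
  "out_pmf W n f m = Pi_pmf {..<n} undefined (\<lambda>i. W (\<lambda>k. f k (m k) i))"

definition err_k ::
  "(('k \<Rightarrow> 'a) \<Rightarrow> 'y pmf) \<Rightarrow> nat \<Rightarrow> ('k \<Rightarrow> nat \<Rightarrow> nat \<Rightarrow> 'a)
   \<Rightarrow> (('k \<Rightarrow> nat) \<Rightarrow> (nat \<Rightarrow> 'y) \<Rightarrow> 'k \<Rightarrow> bool) \<Rightarrow> 'k \<Rightarrow> ('k \<Rightarrow> nat) \<Rightarrow> ('k \<Rightarrow> nat) \<Rightarrow> real" where
  "err_k W n f g k m' m =
     measure_pmf.prob (out_pmf W n f m) {ys. g m' ys k \<noteq> (m' k = m k)}"

definition err ::
  "(('k \<Rightarrow> 'a) \<Rightarrow> 'y pmf) \<Rightarrow> nat \<Rightarrow> ('k \<Rightarrow> nat \<Rightarrow> nat \<Rightarrow> 'a)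
   \<Rightarrow> (('k \<Rightarrow> nat) \<Rightarrow> (nat \<Rightarrow> 'y) \<Rightarrow> 'k \<Rightarrow> bool) \<Rightarrow> ('k \<Rightarrow> nat) \<Rightarrow> ('k \<Rightarrow> nat) \<Rightarrow> real" where
  "err W n f g m' m =
     measure_pmf.prob (out_pmf W n f m) {ys. \<exists>k. g m' ys k \<noteq> (m' k = m k)}"

definition valid_cost_code ::
  "('k \<Rightarrow> 'a set) \<Rightarrow> ('k \<Rightarrow> 'a \<Rightarrow> real) \<Rightarrow> ('k \<Rightarrow> real) \<Rightarrow> ('k \<Rightarrow> nat) \<Rightarrow> nat
   \<Rightarrow> ('k \<Rightarrow> nat \<Rightarrow> nat \<Rightarrow> 'a) \<Rightarrow> bool" where
  "valid_cost_code Xs \<phi> \<Phi> M n f \<longleftrightarrow>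
     (\<forall>m\<in>msgs M. \<forall>k. (\<forall>i<n. f k (m k) i \<in> Xs k) \<and>
        (1 / real n) * (\<Sum>i<n. \<phi> k (f k (m k) i)) \<le> \<Phi> k)"

definition DI_code ::
  "('k \<Rightarrow> 'a set) \<Rightarrow> (('k \<Rightarrow> 'a) \<Rightarrow> 'y pmf) \<Rightarrow> ('k \<Rightarrow> 'a \<Rightarrow> real) \<Rightarrow> ('k \<Rightarrow> real)
   \<Rightarrow> ('k \<Rightarrow> nat) \<Rightarrow> nat \<Rightarrow> real
   \<Rightarrow> ('k \<Rightarrow> nat \<Rightarrow> nat \<Rightarrow> 'a) \<Rightarrow> (('k \<Rightarrow> nat) \<Rightarrow> (nat \<Rightarrow> 'y) \<Rightarrow> 'k \<Rightarrow> bool) \<Rightarrow> bool" where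
  "DI_code Xs W \<phi> \<Phi> M n lam f g \<longleftrightarrow>
     valid_cost_code Xs \<phi> \<Phi> M n f \<and>
     (\<forall>m\<in>msgs M. \<forall>m'\<in>msgs M. err W n f g m' m \<le> lam)"

definition DI_achievable_rate ::
  "('k \<Rightarrow> 'a set) \<Rightarrow> (('k \<Rightarrow> 'a) \<Rightarrow> 'y pmf) \<Rightarrow> ('k \<Rightarrow> 'a \<Rightarrow> real) \<Rightarrow> ('k \<Rightarrow> real)
   \<Rightarrow> ('k \<Rightarrow> real) \<Rightarrow> bool" where
  "DI_achievable_rate Xs W \<phi> \<Phi> R \<longleftrightarrow>
     (\<forall>k. R k \<ge> 0) \<and>
     (\<forall>lam>0. \<exists>N. \<forall>n\<ge>N. \<exists>M f g. (\<forall>k. M k \<ge> 1) \<and>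
        DI_code Xs W \<phi> \<Phi> M n lam f g \<and> (\<forall>k. log 2 (real (M k)) / real n \<ge> R k))"

definition C_DI ::
  "('k::finite \<Rightarrow> 'a set) \<Rightarrow> (('k \<Rightarrow> 'a) \<Rightarrow> 'y pmf) \<Rightarrow> ('k \<Rightarrow> 'a \<Rightarrow> real) \<Rightarrow> ('k \<Rightarrow> real)
   \<Rightarrow> ('k \<Rightarrow> real) set" where
  "C_DI Xs W \<phi> \<Phi> = closure {R. DI_achievable_rate Xs W \<phi> \<Phi> R}"

text \<open>Average error bar e_k(m'): m_k uniform on [M_k] - {m'_k}, other m_j uniform on [M_j].
  (If the averaging set is empty, i.e. M_k = 1, the value is 0 by the convention x/0 = 0.)\<close>
definition avg_err_k ::
  "(('k \<Rightarrow> 'a) \<Rightarrow> 'y pmf) \<Rightarrow> ('k \<Rightarrow> nat) \<Rightarrow> nat \<Rightarrow> ('k \<Rightarrow> nat \<Rightarrow> nat \<Rightarrow> 'a)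
   \<Rightarrow> (('k \<Rightarrow> nat) \<Rightarrow> (nat \<Rightarrow> 'y) \<Rightarrow> 'k \<Rightarrow> bool) \<Rightarrow> 'k \<Rightarrow> ('k \<Rightarrow> nat) \<Rightarrow> real" where
  "avg_err_k W M n f g k m' =
     (let S = {m\<in>msgs M. m k \<noteq> m' k} in (\<Sum>m\<in>S. err_k W n f g k m' m) / real (card S))"

definition avg_err ::
  "(('k::finite \<Rightarrow> 'a) \<Rightarrow> 'y pmf) \<Rightarrow> ('k \<Rightarrow> nat) \<Rightarrow> nat \<Rightarrow> ('k \<Rightarrow> nat \<Rightarrow> nat \<Rightarrow> 'a)
   \<Rightarrow> (('k \<Rightarrow> nat) \<Rightarrow> (nat \<Rightarrow> 'y) \<Rightarrow> 'k \<Rightarrow> bool) \<Rightarrow> ('k \<Rightarrow> nat) \<Rightarrow> real" where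
  "avg_err W M n f g m' = (\<Sum>k\<in>UNIV. avg_err_k W M n f g k m')"

definition DIA_code ::
  "('k::finite \<Rightarrow> 'a set) \<Rightarrow> (('k \<Rightarrow> 'a) \<Rightarrow> 'y pmf) \<Rightarrow> ('k \<Rightarrow> 'a \<Rightarrow> real) \<Rightarrow> ('k \<Rightarrow> real)
   \<Rightarrow> ('k \<Rightarrow> nat) \<Rightarrow> nat \<Rightarrow> real
   \<Rightarrow> ('k \<Rightarrow> nat \<Rightarrow> nat \<Rightarrow> 'a) \<Rightarrow> (('k \<Rightarrow> nat) \<Rightarrow> (nat \<Rightarrow> 'y) \<Rightarrow> 'k \<Rightarrow> bool) \<Rightarrow> bool" where
  "DIA_code Xs W \<phi> \<Phi> M n lam f g \<longleftrightarrow>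
     valid_cost_code Xs \<phi> \<Phi> M n f \<and>
     (\<forall>m\<in>msgs M. err W n f g m m \<le> lam) \<and>
     (\<forall>m'\<in>msgs M. avg_err W M n f g m' \<le> lam)"

definition DIA_achievable_seq ::
  "('k::finite \<Rightarrow> 'a set) \<Rightarrow> (('k \<Rightarrow> 'a) \<Rightarrow> 'y pmf) \<Rightarrow> ('k \<Rightarrow> 'a \<Rightarrow> real) \<Rightarrow> ('k \<Rightarrow> real)
   \<Rightarrow> (nat \<Rightarrow> 'k \<Rightarrow> nat) \<Rightarrow> bool" where
  "DIA_achievable_seq Xs W \<phi> \<Phi> Ms \<longleftrightarrow>
     (\<forall>lam>0. \<exists>N. \<forall>n\<ge>N. \<exists>f g. DIA_code Xs W \<phi> \<Phi> (Ms n) n lam f g)"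

end

theory Submission imports Defs begin

lemma card_msgs_restrict:
  fixes M :: "'k::finite \<Rightarrow> nat"
  assumes "A \<subseteq> {1..M k}"
  shows "card {m\<in>msgs M. m k \<in> A} = card A * (\<Prod>j\<in>UNIV-{k}. M j)"
proof -
  have "{m\<in>msgs M. m k \<in> A} = PiE UNIV (\<lambda>j. if j = k then A else {1..M j})"
    unfolding msgs_def PiE_UNIV_domain
  proof (intro set_eqI iffI)
    fix x assume "x \<in> {m \<in> Pi UNIV (\<lambda>k. {1..M k}). m k \<in> A}"
    then show "x \<in> Pi UNIV (\<lambda>j. if j = k then A else {1..M j})" by (auto simp: Pi_def)
  next
    fix x assume x: "x \<in> Pi UNIV (\<lambda>j. if j = k then A else {1..M j})"
    have 1: "x j \<in> (if j = k then A else {1..M j})" for j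
      using x unfolding Pi_def by blast
    have xk: "x k \<in> A" using 1[of k] by simp
    have "x j \<in> {1..M j}" for j
    proof (cases "j = k")
      case True
      then show ?thesis using xk assms by blast
    next
      case False
      then show ?thesis using 1[of j] by simp
    qed
    then show "x \<in> {m \<in> Pi UNIV (\<lambda>k. {1..M k}). m k \<in> A}" using xk by (simp add: Pi_def)
  qed
  then have "card {m\<in>msgs M. m k \<in> A} = (\<Prod>j\<in>UNIV. card (if j = k then A else {1..M j}))"
    by (simp add: card_PiE)
  also have "\<dots> = card A * (\<Prod>j\<in>UNIV-{k}. card (if j = k then A else {1..M j}))"
    by (subst prod.remove[of UNIV k]) auto
  also have "(\<Prod>j\<in>UNIV-{k}. card (if j = k then A else {1..M j})) = (\<Prod>j\<in>UNIV-{k}. M j)"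
    by (rule prod.cong) auto
  finally show ?thesis .
qed

lemma open_pos: "open {x :: 'k::finite \<Rightarrow> real. \<forall>k. x k > 0}"
proof -
  have "{x :: 'k \<Rightarrow> real. \<forall>k. x k > 0} = (\<Inter>k. {x. x k > 0})" by auto
  moreover have "open {x :: 'k \<Rightarrow> real. x k > 0}" for k
    by (rule open_Collect_less) (auto intro: continuous_intros)
  ultimately show ?thesis by (auto intro: open_INT)
qed

lemma div_bounds:
  fixes x B :: nat
  assumes "B \<ge> 1"
  shows "x div B * B \<le> x" "x < x div B * B + B"
proof -
  have e: "x = x div B * B + x mod B" by simp
  have "x mod B < B" using assms by simp
  then show "x div B * B \<le> x" "x < x div B * B + B" using e by linarith+
qed

lemma block_card:
  fixes M L a :: nat
  assumes "L \<ge> 1" "a \<in> {1..M}"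
  defines "B \<equiv> (M - 1) div L + 1"
  shows "L * card {v\<in>{1..M}. v \<noteq> a \<and> (v - 1) div B = (a - 1) div B} \<le> M - 1"
proof -
  define c where "c = (a - 1) div B"
  have B: "B \<ge> 1" unfolding B_def by simp
  have sub: "{v\<in>{1..M}. v \<noteq> a \<and> (v - 1) div B = (a - 1) div B} \<subseteq> {c*B+1..c*B+B} - {a}"
  proof
    fix v assume v: "v \<in> {v\<in>{1..M}. v \<noteq> a \<and> (v - 1) div B = (a - 1) div B}"
    then have vc: "(v-1) div B = c" unfolding c_def by simp
    have "c * B \<le> v - 1" "v - 1 < c*B + B"
      using div_bounds[OF B, of "v - 1"] unfolding vc by auto
    then show "v \<in> {c*B+1..c*B+B} - {a}" using v by auto
  qed
  have "a \<in> {c*B+1..c*B+B}"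
  proof -
    have "c * B \<le> a - 1" "a - 1 < c*B + B"
      using div_bounds[OF B, of "a - 1"] unfolding c_def by auto
    then show ?thesis using assms(2) by auto
  qed
  then have "card ({c*B+1..c*B+B} - {a}) = B - 1" by simp
  then have "card {v\<in>{1..M}. v \<noteq> a \<and> (v - 1) div B = (a - 1) div B} \<le> (M - 1) div L"
    using card_mono[OF _ sub] unfolding B_def by simp
  then have "L * card {v\<in>{1..M}. v \<noteq> a \<and> (v - 1) div B = (a - 1) div B} \<le> L * ((M - 1) div L)"
    by simp
  also have "\<dots> \<le> M - 1" by simp
  finally show ?thesis .
qed

lemma block_range:
  fixes M L v :: nat
  assumes "L \<ge> 1" "v \<in> {1..M}"
  defines "B \<equiv> (M - 1) div L + 1"
  shows "(v - 1) div B + 1 \<in> {1..L}"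
proof -
  have e: "M - 1 = (M - 1) div L * L + (M - 1) mod L" by simp
  have "(M - 1) mod L < L" using assms(1) by simp
  moreover have "L * B = (M - 1) div L * L + L" unfolding B_def by (simp add: algebra_simps)
  ultimately have "M - 1 < L * B" using e by linarith
  then have "v - 1 < L * B" using assms(2) by auto
  moreover have Bpos: "B > 0" unfolding B_def by simp
  ultimately have "(v - 1) div B < L" using div_less_iff_less_mult[of B "v - 1" L] by (simp add: mult.commute)
  then show ?thesis by simp
qed

lemma msgs_finite: "finite (msgs (M :: 'k::finite \<Rightarrow> nat))"
proof -
  have "msgs M = PiE UNIV (\<lambda>k. {1..M k})" unfolding msgs_def PiE_UNIV_domain by simp
  then show ?thesis by (simp add: finite_PiE)
qed

lemma construct:
  fixes W :: "('k::finite \<Rightarrow> 'a) \<Rightarrow> 'y pmf"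
    and g :: "('k \<Rightarrow> nat) \<Rightarrow> (nat \<Rightarrow> 'y) \<Rightarrow> 'k \<Rightarrow> bool"
  assumes DI: "DI_code Xs W \<phi> \<Phi> Mc n lamd f g"
    and L: "L \<ge> 1" and McL: "\<forall>k. Mc k \<ge> L"
    and lamd: "lamd \<ge> 0"
    and bound: "real CARD('k) * (lamd + 1 / real L) \<le> lam"
  shows "\<exists>f' g'. DIA_code Xs W \<phi> \<Phi> M n lam f' g'"
proof -
  define B where "B k = (M k - 1) div L + 1" for k
  define h where "h k v = (v - 1) div B k + 1" for k v
  define H where "H m = (\<lambda>k. h k (m k))" for m :: "'k \<Rightarrow> nat"
  define f' where "f' k v i = f k (h k v) i" for k v i
  define g' where "g' m' ys = g (H m') ys" for m' ys
  have Hmsgs: "H m \<in> msgs Mc" if m: "m \<in> msgs M" for m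
  proof -
    have "h k (m k) \<in> {1..Mc k}" for k
    proof -
      have "m k \<in> {1..M k}" using m unfolding msgs_def by auto
      then have "h k (m k) \<in> {1..L}" unfolding h_def B_def using block_range[OF L] by blast
      then show ?thesis using McL[rule_format, of k] by auto
    qed
    then show ?thesis unfolding msgs_def H_def by auto
  qed
  have out: "out_pmf W n f' m = out_pmf W n f (H m)" for m
    unfolding out_pmf_def f'_def H_def by simp
  have DIv: "\<forall>m\<in>msgs Mc. \<forall>k. (\<forall>i<n. f k (m k) i \<in> Xs k) \<and>
        (1 / real n) * (\<Sum>i<n. \<phi> k (f k (m k) i)) \<le> \<Phi> k"
    using DI unfolding DI_code_def valid_cost_code_def by blast
  have DIe: "\<forall>m\<in>msgs Mc. \<forall>m'\<in>msgs Mc. err W n f g m' m \<le> lamd"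
    using DI unfolding DI_code_def by blast
  have valid: "valid_cost_code Xs \<phi> \<Phi> M n f'"
    unfolding valid_cost_code_def
  proof (intro ballI allI)
    fix m k assume "m \<in> msgs M"
    then have "H m \<in> msgs Mc" by (rule Hmsgs)
    from DIv[rule_format, OF this, of k]
    show "(\<forall>i<n. f' k (m k) i \<in> Xs k) \<and> 1 / real n * (\<Sum>i<n. \<phi> k (f' k (m k) i)) \<le> \<Phi> k"
      unfolding f'_def H_def by simp
  qed
  have lamd_le: "lamd \<le> lam"
  proof -
    have "lamd \<le> lamd + 1 / real L" by simp
    also have "\<dots> \<le> real CARD('k) * (lamd + 1 / real L)"
    proof -
      have a: "0 \<le> lamd + 1 / real L" using lamd by simp
      have c: "1 \<le> real CARD('k)" by (simp add: Suc_le_eq)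
      show ?thesis using mult_right_mono[OF c a] by simp
    qed
    finally show ?thesis using bound by simp
  qed
  have diag: "err W n f' g' m m \<le> lam" if m: "m \<in> msgs M" for m
  proof -
    have "err W n f' g' m m = err W n f g (H m) (H m)"
      unfolding err_def out g'_def by simp
    also have "\<dots> \<le> lamd" using DIe Hmsgs[OF m] by blast
    finally show ?thesis using lamd_le by simp
  qed
  have errk_le: "err_k W n f g k m' m \<le> err W n f g m' m" for k m' m
    unfolding err_k_def err_def by (rule measure_pmf.finite_measure_mono) auto
  have avgk: "avg_err_k W M n f' g' k m' \<le> lamd + 1 / real L" if m': "m' \<in> msgs M" for m' k
  proof -
    define S where "S = {m\<in>msgs M. m k \<noteq> m' k}"
    define C where "C = {v\<in>{1..M k}. v \<noteq> m' k \<and> (v - 1) div B k = (m' k - 1) div B k}"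
    define T where "T = {m\<in>msgs M. m k \<in> C}"
    define P where "P = (\<Prod>j\<in>UNIV-{k}. M j)"
    have mk: "m' k \<in> {1..M k}" using m' unfolding msgs_def by auto
    have Seq: "S = {m\<in>msgs M. m k \<in> {1..M k} - {m' k}}" unfolding S_def msgs_def by auto
    have cS: "card S = (M k - 1) * P"
      using card_msgs_restrict[of "{1..M k} - {m' k}" M k] mk unfolding Seq P_def by auto
    have cT: "card T = card C * P"
    proof -
      have "C \<subseteq> {1..M k}" unfolding C_def by auto
      from card_msgs_restrict[of C M k, OF this] show ?thesis unfolding T_def P_def .
    qed
    have LC: "L * card C \<le> M k - 1"
      using block_card[OF L mk] unfolding C_def B_def by simp
    have "L * card T \<le> card S" unfolding cS cT
      using mult_right_mono[OF LC, of P] by (simp add: mult.assoc)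
    then have LT: "real L * real (card T) \<le> real (card S)"
      by (metis of_nat_le_iff of_nat_mult)
    have finS: "finite S" unfolding S_def by (rule finite_subset[OF _ msgs_finite[of M]]) auto
    have TS: "T \<subseteq> S" unfolding T_def S_def C_def by auto
    have each: "err_k W n f' g' k m' m \<le> lamd + (if m \<in> T then 1 else 0)" if m: "m \<in> S" for m
    proof (cases "m \<in> T")
      case True
      have "err_k W n f' g' k m' m \<le> 1" unfolding err_k_def by simp
      then show ?thesis using True lamd by simp
    next
      case False
      have mM: "m \<in> msgs M" and ne: "m k \<noteq> m' k" using m unfolding S_def by auto
      then have "m k \<in> {1..M k}" unfolding msgs_def by auto
      then have "m k \<notin> C \<Longrightarrow> h k (m k) \<noteq> h k (m' k)" using ne unfolding C_def h_def by auto
      then have hne: "H m k \<noteq> H m' k" using False mM unfolding T_def H_def by auto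
      have "err_k W n f' g' k m' m = err_k W n f g k (H m') (H m)"
        unfolding err_k_def out g'_def using ne hne by simp
      also have "\<dots> \<le> err W n f g (H m') (H m)" by (rule errk_le)
      also have "\<dots> \<le> lamd" using DIe Hmsgs[OF mM] Hmsgs[OF m'] by blast
      finally show ?thesis using False by simp
    qed
    have "(\<Sum>m\<in>S. err_k W n f' g' k m' m) \<le> (\<Sum>m\<in>S. lamd + (if m \<in> T then 1 else 0))"
      by (rule sum_mono) (rule each)
    also have "\<dots> = lamd * card S + card T"
    proof -
      have "(\<Sum>m\<in>S. (if m \<in> T then 1 else 0 :: real)) = card (S \<inter> T)"
        using finS by (simp add: sum.If_cases)
      also have "S \<inter> T = T" using TS by auto
      finally show ?thesis by (simp add: sum.distrib)
    qed
    finally have sumle: "(\<Sum>m\<in>S. err_k W n f' g' k m' m) \<le> lamd * card S + card T" .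
    show ?thesis
    proof (cases "card S = 0")
      case True
      then show ?thesis unfolding avg_err_k_def Let_def S_def[symmetric] using lamd by simp
    next
      case False
      then have pos: "real (card S) > 0" by simp
      have "(\<Sum>m\<in>S. err_k W n f' g' k m' m) / real (card S) \<le> (lamd * card S + card T) / card S"
        using sumle pos by (simp add: divide_right_mono)
      also have "\<dots> = lamd + card T / card S" using pos by (simp add: field_simps)
      also have "card T / card S \<le> 1 / real L"
        using LT pos L by (simp add: field_simps)
      finally show ?thesis unfolding avg_err_k_def Let_def S_def[symmetric] by simp
    qed
  qed
  have avg: "avg_err W M n f' g' m' \<le> lam" if m': "m' \<in> msgs M" for m'
  proof -
    have "avg_err W M n f' g' m' \<le> (\<Sum>k\<in>(UNIV::'k set). lamd + 1 / real L)"
      unfolding avg_err_def by (rule sum_mono) (rule avgk[OF m'])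
    also have "\<dots> = real CARD('k) * (lamd + 1 / real L)" by simp
    finally show ?thesis using bound by simp
  qed
  have "DIA_code Xs W \<phi> \<Phi> M n lam f' g'"
    unfolding DIA_code_def using valid diag avg by blast
  then show ?thesis by blast
qed

theorem theorem3:
  fixes Xs :: "'k::finite \<Rightarrow> 'a set"
    and W :: "('k \<Rightarrow> 'a) \<Rightarrow> 'y::finite pmf"
    and \<phi> :: "'k \<Rightarrow> 'a \<Rightarrow> real"
    and \<Phi> :: "'k \<Rightarrow> real"
    and Ms :: "nat \<Rightarrow> 'k \<Rightarrow> nat"
  assumes "\<And>k. finite (Xs k)" and "\<And>k. Xs k \<noteq> {}"
    and "\<And>k x. x \<in> Xs k \<Longrightarrow> \<phi> k x \<ge> 0"
    and "\<And>k. \<Phi> k \<ge> 0"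
    and "\<exists>R\<in>C_DI Xs W \<phi> \<Phi>. \<forall>k. R k > 0"
  shows "DIA_achievable_seq Xs W \<phi> \<Phi> Ms"
proof -
  from assms(5) obtain R where R: "R \<in> closure {R. DI_achievable_rate Xs W \<phi> \<Phi> R}" "\<forall>k. R k > 0"
    unfolding C_DI_def by blast
  have "{x :: 'k \<Rightarrow> real. \<forall>k. x k > 0} \<inter> closure {R. DI_achievable_rate Xs W \<phi> \<Phi> R} \<noteq> {}"
    using R by blast
  then have "{x :: 'k \<Rightarrow> real. \<forall>k. x k > 0} \<inter> {R. DI_achievable_rate Xs W \<phi> \<Phi> R} \<noteq> {}"
    using open_Int_closure_eq_empty[OF open_pos] by blast
  then obtain R' where R'a: "DI_achievable_rate Xs W \<phi> \<Phi> R'" and R'p: "\<forall>k. R' k > 0" by blast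
  define r where "r = Min (range R')"
  have rpos: "r > 0" unfolding r_def using R'p by (simp add: Min_gr_iff)
  have rle: "r \<le> R' k" for k unfolding r_def by simp
  show ?thesis
    unfolding DIA_achievable_seq_def
  proof (intro allI impI)
    fix lam :: real assume lam: "lam > 0"
    define K where "K = real CARD('k)"
    have K: "K \<ge> 1" unfolding K_def by (simp add: Suc_le_eq)
    define lamd where "lamd = lam / (2 * K)"
    define L where "L = nat \<lceil>2 * K / lam\<rceil> + 1"
    have L1: "L \<ge> 1" unfolding L_def by simp
    have lamdpos: "lamd > 0" unfolding lamd_def using lam K by simp
    have Lge: "real L \<ge> 2 * K / lam" unfolding L_def by linarith
    have bound: "real CARD('k) * (lamd + 1 / real L) \<le> lam"
    proof -
      have Lp: "real L > 0" using L1 by simp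
      have "2 * K \<le> real L * lam" using Lge lam by (simp add: divide_le_eq)
      then have "1 / real L \<le> lam / (2 * K)" using Lp K lam by (simp add: divide_simps mult.commute)
      then have "K * (1 / real L) \<le> K * (lam / (2 * K))" using K by (intro mult_left_mono) auto
      also have "\<dots> = lam / 2" using K by simp
      finally have a: "K * (1 / real L) \<le> lam / 2" .
      have b: "K * lamd = lam / 2" unfolding lamd_def using K by simp
      have c: "real CARD('k) * (lamd + 1 / real L) = K * lamd + K * (1 / real L)"
        unfolding K_def by (simp only: distrib_left)
      show ?thesis using a b c by linarith
    qed
    from R'a lamdpos obtain N where N: "\<forall>n\<ge>N. \<exists>M f g. (\<forall>k. M k \<ge> 1) \<and>
        DI_code Xs W \<phi> \<Phi> M n lamd f g \<and> (\<forall>k. log 2 (real (M k)) / real n \<ge> R' k)"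
      unfolding DI_achievable_rate_def by blast
    define N2 where "N2 = nat \<lceil>log 2 (real L) / r\<rceil> + 1"
    show "\<exists>N. \<forall>n\<ge>N. \<exists>f g. DIA_code Xs W \<phi> \<Phi> (Ms n) n lam f g"
    proof (rule exI[of _ "max N N2"], intro allI impI)
      fix n assume n: "n \<ge> max N N2"
      then obtain Mc f g where Mc1: "\<forall>k. Mc k \<ge> 1" and DI: "DI_code Xs W \<phi> \<Phi> Mc n lamd f g"
        and rate: "\<forall>k. log 2 (real (Mc k)) / real n \<ge> R' k" using N by auto
      have npos: "real n > 0" using n unfolding N2_def by simp
      have nr: "real n * r \<ge> log 2 (real L)"
      proof -
        have "real n \<ge> log 2 (real L) / r" using n unfolding N2_def by linarith
        then show ?thesis using rpos by (simp add: pos_divide_le_eq)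
      qed
      have McL: "\<forall>k. Mc k \<ge> L"
      proof
        fix k
        have "log 2 (real (Mc k)) \<ge> real n * R' k"
          using rate[rule_format, of k] npos by (simp add: pos_le_divide_eq mult.commute)
        moreover have "real n * R' k \<ge> real n * r" using rle[of k] npos by simp
        ultimately have "log 2 (real (Mc k)) \<ge> log 2 (real L)" using nr by linarith
        moreover have "real (Mc k) > 0" "real L > 0" using Mc1[rule_format, of k] L1 by auto
        ultimately have "real L \<le> real (Mc k)" by simp
        then show "Mc k \<ge> L" by simp
      qed
      show "\<exists>f g. DIA_code Xs W \<phi> \<Phi> (Ms n) n lam f g"
        using construct[OF DI L1 McL _ bound] lamdpos by simp
    qed
  qed
qed

end
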